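(* There is a deterministic $1$-local $0$-memory routing algorithm on half-$\theta_6$-graphs such that for every finite point set $P$ in general position and all $u,w\in P$ with $w$ in a positive cone of $u$, the path followed when routing from $w$ to $u$ has length at most $\left(\tfrac{5}{\sqrt{3}}\cos\alpha-\sin\alpha\right)\cdot|uw|$, where $m$ is the midpoint of the side of the canonical triangle $T_{uw}$ opposite $u$ and $\alpha$ is the unsigned angle between $uw$ and $um$.
   Context: Cones: for a point $u$, the plane is partitioned into six cones with apex $u$, bounded by the rays from $u$ at angles $j\pi/3$ ($j=0,\dots,5$) from the positive $x$-axis; counterclockwise from the positive $x$-axis they are $\overline{C}_1, C_0, \overline{C}_2, C_1, \overline{C}_0, C_2$; $C_0,C_1,C_2$ are positive and the others negative. General position: no two points of $P$ lie on a line parallel to a cone boundary ray. Half-$\theta_6$-graph of $P$: for each $u$ and each positive cone $C$ of $u$ containing other points, add an edge from $u$ to the point of $P$ in $C$ whose orthogonal projection onto the bisector of $C$ is closest to $u$; edges weighted by Euclidean length. Canonical triangle $T_{uv}$ (for $v$ in a positive cone $C$ of $u$): the triangle bounded by the boundary rays of $C$ and the line through $v$ perpendicular to the bisector of $C$. Routing model: vertices are identified by coordinates; a deterministic $1$-local $0$-memory routing algorithm chooses the neighbour of the current vertex $s$ to forward to as a deterministic function only of $s$, the destination $t$, and the neighbours of $s$ (with coordinates), with no memory carried by the message. Path length is the sum of Euclidean edge lengths traversed until the destination is reached. *)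

theory Defs
  imports "HOL-Analysis.Analysis"
begin

type_synonym point = "real \<times> real"

definition ray_dir :: "real \<Rightarrow> point" where
  "ray_dir \<theta> = (cos \<theta>, sin \<theta>)"

definition in_sector :: "real \<Rightarrow> point \<Rightarrow> point \<Rightarrow> bool" where
  "in_sector a u v \<longleftrightarrow>
     (\<exists>s t. s > 0 \<and> t > 0 \<and> v = u + s *\<^sub>R ray_dir a + t *\<^sub>R ray_dir (a + pi/3))"

text \<open>Positive cone C_i (i = 0,1,2) of u: bounded by rays at angles (2i+1)pi/3 and (2i+2)pi/3,
  i.e. C_0 = (pi/3, 2pi/3), C_1 = (pi, 4pi/3), C_2 = (5pi/3, 2pi).\<close>
definition cone_start :: "nat \<Rightarrow> real" where
  "cone_start i = real (2*i+1) * pi / 3"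

definition pos_cone :: "nat \<Rightarrow> point \<Rightarrow> point \<Rightarrow> bool" where
  "pos_cone i u v \<longleftrightarrow> in_sector (cone_start i) u v"

definition bisector :: "nat \<Rightarrow> point" where
  "bisector i = ray_dir (cone_start i + pi/6)"

definition proj_dist :: "nat \<Rightarrow> point \<Rightarrow> point \<Rightarrow> real" where
  "proj_dist i u v = inner (v - u) (bisector i)"

definition general_position :: "point set \<Rightarrow> bool" where
  "general_position P \<longleftrightarrow>
     (\<forall>p\<in>P. \<forall>q\<in>P. p \<noteq> q \<longrightarrow> (\<forall>j::nat. \<forall>c::real. q - p \<noteq> c *\<^sub>R ray_dir (real j * pi / 3)))"

definition half_theta6_edge :: "point set \<Rightarrow> point \<Rightarrow> point \<Rightarrow> bool" where
  "half_theta6_edge P u v \<longleftrightarrow> u \<in> P \<and> v \<in> P \<and>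
     (\<exists>i<3. pos_cone i u v \<and> (\<forall>v'\<in>P. pos_cone i u v' \<longrightarrow> proj_dist i u v \<le> proj_dist i u v'))"

definition neighbours :: "point set \<Rightarrow> point \<Rightarrow> point set" where
  "neighbours P s = {v. half_theta6_edge P s v \<or> half_theta6_edge P v s}"

text \<open>A 1-local 0-memory routing algorithm is a function f of the current vertex, the destination
  and the neighbour set of the current vertex. route f P t w k is the k-th vertex visited
  when routing from w to t.\<close>
definition route :: "(point \<Rightarrow> point \<Rightarrow> point set \<Rightarrow> point) \<Rightarrow> point set \<Rightarrow> point \<Rightarrow> point \<Rightarrow> nat \<Rightarrow> point" where
  "route f P t w k = ((\<lambda>s. f s t (neighbours P s)) ^^ k) w"

definition route_length :: "(point \<Rightarrow> point \<Rightarrow> point set \<Rightarrow> point) \<Rightarrow> point set \<Rightarrow> point \<Rightarrow> point \<Rightarrow> nat \<Rightarrow> real" where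
  "route_length f P t w n = (\<Sum>k<n. dist (route f P t w k) (route f P t w (Suc k)))"

text \<open>Canonical triangle T_uw for w in positive cone i of u: its side opposite u lies on the line
  through w perpendicular to the bisector, with endpoints on the two boundary rays at distance
  h / cos(pi/6) from u, where h = proj_dist i u w. canonical_mid is the midpoint of that side.\<close>
definition canonical_corner1 :: "nat \<Rightarrow> point \<Rightarrow> point \<Rightarrow> point" where
  "canonical_corner1 i u w = u + (proj_dist i u w / cos (pi/6)) *\<^sub>R ray_dir (cone_start i)"

definition canonical_corner2 :: "nat \<Rightarrow> point \<Rightarrow> point \<Rightarrow> point" where
  "canonical_corner2 i u w = u + (proj_dist i u w / cos (pi/6)) *\<^sub>R ray_dir (cone_start i + pi/3)"

definition canonical_mid :: "nat \<Rightarrow> point \<Rightarrow> point \<Rightarrow> point" where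
  "canonical_mid i u w = midpoint (canonical_corner1 i u w) (canonical_corner2 i u w)"

definition vec_angle :: "point \<Rightarrow> point \<Rightarrow> real" where
  "vec_angle x y = arccos (inner x y / (norm x * norm y))"

end

theory Submission
  imports Defs
begin


definition cA :: "real \<Rightarrow> point \<Rightarrow> real" where
  "cA p x = 2/3 * (2 * inner x (ray_dir p) - inner x (ray_dir (p + pi/3)))"
definition cB :: "real \<Rightarrow> point \<Rightarrow> real" where
  "cB p x = 2/3 * (2 * inner x (ray_dir (p + pi/3)) - inner x (ray_dir p))"

lemma s3sq: "sqrt 3 * sqrt 3 = (3::real)" by simp

lemma cos120: "cos (2*pi/3) = -1/2"
proof -
  have "2*pi/3 = pi/3 + pi/3" by simp
  then show ?thesis by (simp only: cos_add cos_60 sin_60) simp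
qed
lemma sin120: "sin (2*pi/3) = sqrt 3 / 2"
proof -
  have "2*pi/3 = pi/3 + pi/3" by simp
  then show ?thesis by (simp only: sin_add cos_60 sin_60)
qed

lemma cos60p: "cos (p + pi/3) = cos p / 2 - sqrt 3 / 2 * sin p"
  by (simp add: cos_add cos_60 sin_60)
lemma sin60p: "sin (p + pi/3) = sin p / 2 + sqrt 3 / 2 * cos p"
  by (simp add: sin_add cos_60 sin_60)
lemma cos120p: "cos (p + 2*pi/3) = - cos p / 2 - sqrt 3 / 2 * sin p"
  by (simp add: cos_add cos120 sin120)
lemma sin120p: "sin (p + 2*pi/3) = - sin p / 2 + sqrt 3 / 2 * cos p"
  by (simp add: sin_add cos120 sin120)

lemma rd0: "ray_dir p = (cos p, sin p)" by (simp add: ray_dir_def)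
lemma rd60: "ray_dir (p + pi/3) = (cos p / 2 - sqrt 3 / 2 * sin p, sin p / 2 + sqrt 3 / 2 * cos p)"
  by (simp add: ray_dir_def cos60p sin60p)
lemma rd30: "ray_dir (p + pi/6) = (sqrt 3 / 2 * cos p - sin p / 2, sqrt 3 / 2 * sin p + cos p / 2)"
  by (simp add: ray_dir_def cos_add sin_add cos_30 sin_30 algebra_simps)
lemma rd120: "ray_dir (p + 2*pi/3) = ray_dir (p + pi/3) - ray_dir p"
  unfolding ray_dir_def cos120p sin120p cos60p sin60p by (simp add: algebra_simps)
lemma rd180: "ray_dir (p + pi) = - ray_dir p"
  by (simp add: ray_dir_def)

lemma cA_lin: "cA p (x + y) = cA p x + cA p y" "cA p (x - y) = cA p x - cA p y"
  "cA p (c *\<^sub>R x) = c * cA p x" "cA p (- x) = - cA p x"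
  by (simp_all add: cA_def inner_add_left inner_diff_left algebra_simps)
lemma cB_lin: "cB p (x + y) = cB p x + cB p y" "cB p (x - y) = cB p x - cB p y"
  "cB p (c *\<^sub>R x) = c * cB p x" "cB p (- x) = - cB p x"
  by (simp_all add: cB_def inner_add_left inner_diff_left algebra_simps)

lemma aux1: fixes ya yb cc ss rr :: real
  assumes "ss * ss + cc * cc = 1" "rr * rr = 3/4"
  shows "ya = (2/3 * (2 * (ya * cc + yb * ss) - (ya * (cc/2 - rr * ss) + yb * (ss/2 + rr * cc)))) * cc
     + (2/3 * (2 * (ya * (cc/2 - rr * ss) + yb * (ss/2 + rr * cc)) - (ya * cc + yb * ss))) * (cc/2 - rr * ss)"
  using assms by algebra
lemma aux2: fixes ya yb cc ss rr :: real
  assumes "ss * ss + cc * cc = 1" "rr * rr = 3/4"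
  shows "yb = (2/3 * (2 * (ya * cc + yb * ss) - (ya * (cc/2 - rr * ss) + yb * (ss/2 + rr * cc)))) * ss
     + (2/3 * (2 * (ya * (cc/2 - rr * ss) + yb * (ss/2 + rr * cc)) - (ya * cc + yb * ss))) * (ss/2 + rr * cc)"
  using assms by algebra
lemma aux3: fixes ya yb cc ss rr :: real
  assumes "ss * ss + cc * cc = 1" "rr * rr = 3/4"
  shows "ya * (rr * cc - ss/2) + yb * (rr * ss + cc/2) = rr * (2/3 * (2 * (ya * cc + yb * ss) - (ya * (cc/2 - rr * ss) + yb * (ss/2 + rr * cc)))
     + 2/3 * (2 * (ya * (cc/2 - rr * ss) + yb * (ss/2 + rr * cc)) - (ya * cc + yb * ss)))"
  using assms by algebra

lemma sc_id: "sin p * sin p + cos p * cos p = (1::real)"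
  using sin_cos_squared_add[of p] by (simp add: power2_eq_square)
lemma r_id: "sqrt 3 / 2 * (sqrt 3 / 2) = (3/4::real)" by simp

lemma rd60': "ray_dir (p + pi/3) = (cos p / 2 - sqrt 3 / 2 * sin p, sin p / 2 + sqrt 3 / 2 * cos p)"
  by (rule rd60)

lemma decomp: "x = cA p x *\<^sub>R ray_dir p + cB p x *\<^sub>R ray_dir (p + pi/3)"
proof -
  obtain x1 x2 where x: "x = (x1, x2)" by (cases x)
  define a where "a = cA p x"
  define b where "b = cB p x"
  have e1: "x1 = a * cos p + b * (cos p / 2 - sqrt 3 / 2 * sin p)"
    unfolding a_def b_def x cA_def cB_def rd60 unfolding rd0
    using aux1[where ya=x1 and yb=x2 and cc="cos p" and ss="sin p" and rr="sqrt 3 / 2", OF sc_id r_id] by simp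
  have e2: "x2 = a * sin p + b * (sin p / 2 + sqrt 3 / 2 * cos p)"
    unfolding a_def b_def x cA_def cB_def rd60 unfolding rd0
    using aux2[where ya=x1 and yb=x2 and cc="cos p" and ss="sin p" and rr="sqrt 3 / 2", OF sc_id r_id] by simp
  have "x = a *\<^sub>R ray_dir p + b *\<^sub>R ray_dir (p + pi/3)"
    unfolding rd60 unfolding rd0 x using e1 e2 by simp
  then show ?thesis unfolding a_def b_def .
qed

lemma bis_inner: "inner x (ray_dir (p + pi/6)) = sqrt 3 / 2 * (cA p x + cB p x)"
proof -
  obtain x1 x2 where x: "x = (x1, x2)" by (cases x)
  show ?thesis
    unfolding x cA_def cB_def rd60 rd30 unfolding rd0
    using aux3[where ya=x1 and yb=x2 and cc="cos p" and ss="sin p" and rr="sqrt 3 / 2", OF sc_id r_id] by (simp add: algebra_simps)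
qed

lemma inner_rd: "inner (ray_dir p) (ray_dir q) = cos (p - q)"
  by (simp add: ray_dir_def cos_diff)
lemma inner_d11: "inner (ray_dir p) (ray_dir p) = 1" by (simp add: inner_rd)
lemma inner_d12: "inner (ray_dir p) (ray_dir (p + pi/3)) = 1/2"
  by (simp add: inner_rd cos_60)
lemma inner_d21: "inner (ray_dir (p + pi/3)) (ray_dir p) = 1/2"
  by (simp add: inner_rd cos_60)

lemma cA_comb: "cA p (a *\<^sub>R ray_dir p + b *\<^sub>R ray_dir (p + pi/3)) = a"
  by (simp add: cA_def inner_add_left inner_d11 inner_d12 inner_d21 algebra_simps)
lemma cB_comb: "cB p (a *\<^sub>R ray_dir p + b *\<^sub>R ray_dir (p + pi/3)) = b"
  by (simp add: cB_def inner_add_left inner_d11 inner_d12 inner_d21 algebra_simps)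

lemma in_sector_iff: "in_sector p u v \<longleftrightarrow> cA p (v - u) > 0 \<and> cB p (v - u) > 0"
proof
  assume "in_sector p u v"
  then obtain a b where ab: "a > 0" "b > 0" "v = u + a *\<^sub>R ray_dir p + b *\<^sub>R ray_dir (p + pi/3)"
    unfolding in_sector_def by blast
  then have "v - u = a *\<^sub>R ray_dir p + b *\<^sub>R ray_dir (p + pi/3)" by simp
  then show "cA p (v - u) > 0 \<and> cB p (v - u) > 0" using ab cA_comb cB_comb by simp
next
  assume h: "cA p (v - u) > 0 \<and> cB p (v - u) > 0"
  have "v = u + (v - u)" by simp
  also have "\<dots> = u + cA p (v - u) *\<^sub>R ray_dir p + cB p (v - u) *\<^sub>R ray_dir (p + pi/3)"
    using decomp[of "v - u" p] by (simp add: add.assoc)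
  finally show "in_sector p u v" unfolding in_sector_def using h by blast
qed

lemma rot_cA: "cA (p + 2*pi/3) x = cB p x"
proof -
  have e: "p + 2*pi/3 + pi/3 = p + pi" by simp
  show ?thesis unfolding cA_def cB_def e rd120 rd180
    by (simp add: inner_diff_right algebra_simps)
qed
lemma rot_cB: "cB (p + 2*pi/3) x = - cA p x - cB p x"
proof -
  have e: "p + 2*pi/3 + pi/3 = p + pi" by simp
  show ?thesis unfolding cA_def cB_def e rd120 rd180
    by (simp add: inner_diff_right algebra_simps)
qed

lemma norm_coord: "norm x = sqrt ((cA p x)^2 + cA p x * cB p x + (cB p x)^2)"
proof -
  define a where "a = cA p x"
  define b where "b = cB p x"
  have x: "x = a *\<^sub>R ray_dir p + b *\<^sub>R ray_dir (p + pi/3)"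
    unfolding a_def b_def by (rule decomp)
  have "inner x x = a^2 + a*b + b^2"
    unfolding x by (simp add: inner_add_left inner_add_right inner_d11 inner_d12 inner_d21
        inner_d11[of "p + pi/3"] power2_eq_square algebra_simps)
  then show ?thesis unfolding a_def b_def by (simp add: norm_eq_sqrt_inner)
qed




lemma rd_eq: "a = b \<or> a = b + 2*pi \<or> b = a + 2*pi \<Longrightarrow> ray_dir a = ray_dir b"
  by (auto simp: ray_dir_def)

lemma i3_cases: "(i::nat) < 3 \<Longrightarrow> i = 0 \<or> i = 1 \<or> i = 2" by auto

lemma rel_next: "i < 3 \<Longrightarrow> \<exists>j<3. \<forall>\<phi>. ray_dir (cone_start j + \<phi>) = ray_dir (cone_start i + 2*pi/3 + \<phi>)"
proof -
  assume "i < 3"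
  then consider "i = 0" | "i = 1" | "i = 2" by linarith
  then show ?thesis
  proof cases
    case 1 then show ?thesis
      by (intro exI[of _ 1]) (auto intro!: rd_eq simp: cone_start_def field_simps)
  next
    case 2 then show ?thesis
      by (intro exI[of _ 2]) (auto intro!: rd_eq simp: cone_start_def field_simps)
  next
    case 3 then show ?thesis
      by (intro exI[of _ 0]) (auto intro!: rd_eq simp: cone_start_def field_simps)
  qed
qed

lemma rel_next2: "i < 3 \<Longrightarrow> \<exists>j<3. \<forall>\<phi>. ray_dir (cone_start j + \<phi>) = ray_dir (cone_start i + 2*pi/3 + 2*pi/3 + \<phi>)"
proof -
  assume "i < 3"
  then consider "i = 0" | "i = 1" | "i = 2" by linarith
  then show ?thesis
  proof cases
    case 1 then show ?thesis
      by (intro exI[of _ 2]) (auto intro!: rd_eq simp: cone_start_def field_simps)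
  next
    case 2 then show ?thesis
      by (intro exI[of _ 0]) (auto intro!: rd_eq simp: cone_start_def field_simps)
  next
    case 3 then show ?thesis
      by (intro exI[of _ 1]) (auto intro!: rd_eq simp: cone_start_def field_simps)
  qed
qed

lemma rel_all: "i < 3 \<Longrightarrow> j < 3 \<Longrightarrow> j = i \<or>
   (\<forall>\<phi>. ray_dir (cone_start j + \<phi>) = ray_dir (cone_start i + 2*pi/3 + \<phi>)) \<or>
   (\<forall>\<phi>. ray_dir (cone_start j + \<phi>) = ray_dir (cone_start i + 2*pi/3 + 2*pi/3 + \<phi>))"
proof -
  assume a: "i < 3" "j < 3"
  then consider "i = 0" | "i = 1" | "i = 2" by linarith
  then show ?thesis
  proof cases
    case 1 then consider "j = 0" | "j = 1" | "j = 2" using a by linarith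
    then show ?thesis using 1 by cases (auto intro!: rd_eq simp: cone_start_def field_simps)
  next
    case 2 then consider "j = 0" | "j = 1" | "j = 2" using a by linarith
    then show ?thesis using 2 by cases (auto intro!: rd_eq simp: cone_start_def field_simps)
  next
    case 3 then consider "j = 0" | "j = 1" | "j = 2" using a by linarith
    then show ?thesis using 3 by cases (auto intro!: rd_eq simp: cone_start_def field_simps)
  qed
qed

lemma sector_cong:
  assumes "\<forall>\<phi>. ray_dir (a + \<phi>) = ray_dir (b + \<phi>)"
  shows "in_sector a = in_sector b" "cA a = cA b" "cB a = cB b"
    "ray_dir (a + pi/6) = ray_dir (b + pi/6)"
proof -
  have e0: "ray_dir a = ray_dir b" using assms[rule_format, of 0] by simp
  have e1: "ray_dir (a + pi/3) = ray_dir (b + pi/3)" using assms by blast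
  show "in_sector a = in_sector b" by (intro ext) (simp add: in_sector_def e0 e1)
  show "cA a = cA b" by (intro ext) (simp add: cA_def e0 e1)
  show "cB a = cB b" by (intro ext) (simp add: cB_def e0 e1)
  show "ray_dir (a + pi/6) = ray_dir (b + pi/6)" using assms by blast
qed

lemma sec1: "in_sector (th + 2*pi/3) p q \<longleftrightarrow> cB th (q - p) > 0 \<and> cA th (q - p) + cB th (q - p) < 0"
  unfolding in_sector_iff rot_cA rot_cB by auto
lemma sec2: "in_sector (th + 2*pi/3 + 2*pi/3) p q \<longleftrightarrow> cA th (q - p) > 0 \<and> cA th (q - p) + cB th (q - p) < 0"
  unfolding in_sector_iff rot_cA[of "th + 2*pi/3"] rot_cB[of "th + 2*pi/3"] rot_cA rot_cB by auto
lemma bis0: "inner x (ray_dir (th + pi/6)) = sqrt 3 / 2 * (cA th x + cB th x)"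
  by (rule bis_inner)
lemma bis1: "inner x (ray_dir (th + 2*pi/3 + pi/6)) = - sqrt 3 / 2 * cA th x"
  unfolding bis_inner rot_cA rot_cB by (simp add: algebra_simps)
lemma bis2: "inner x (ray_dir (th + 2*pi/3 + 2*pi/3 + pi/6)) = - sqrt 3 / 2 * cB th x"
  unfolding bis_inner rot_cA[of "th + 2*pi/3"] rot_cB[of "th + 2*pi/3"] rot_cA rot_cB by (simp add: algebra_simps)

definition amax :: "(point \<Rightarrow> real) \<Rightarrow> point set \<Rightarrow> point" where
  "amax g S = (SOME v. v \<in> S \<and> (\<forall>w\<in>S. g w \<le> g v))"

lemma ex_max: "finite S \<Longrightarrow> S \<noteq> {} \<Longrightarrow> \<exists>x\<in>S. \<forall>w\<in>S. (g::point \<Rightarrow> real) w \<le> g x"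
proof -
  assume a: "finite S" "S \<noteq> {}"
  have "Max (g ` S) \<in> g ` S" using a by simp
  then obtain x where x: "x \<in> S" "g x = Max (g ` S)" by auto
  have "\<forall>w\<in>S. g w \<le> g x" using a x by simp
  then show ?thesis using x by blast
qed

lemma amax: "finite S \<Longrightarrow> S \<noteq> {} \<Longrightarrow> amax g S \<in> S \<and> (\<forall>w\<in>S. g w \<le> g (amax g S))"
  unfolding amax_def by (rule someI_ex) (use ex_max in blast)

definition nxt :: "point \<Rightarrow> point \<Rightarrow> point set \<Rightarrow> point" where
 "nxt s t N = (let i = (SOME i. i < 3 \<and> pos_cone i t s);
    A = (\<lambda>v. cA (cone_start i) (v - t)); B = (\<lambda>v. cB (cone_start i) (v - t));
    Qn = {v\<in>N. 0 \<le> A v \<and> 0 \<le> B v \<and> A v < A s \<and> B v < B s};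
    Ln = {v\<in>N. 0 \<le> A v \<and> B s < B v \<and> A v + B v < A s + B s};
    Rn = {v\<in>N. 0 \<le> B v \<and> A s < A v \<and> A v + B v < A s + B s}
  in if Rn = {} \<and> Ln = {} then (if B s \<le> A s then amax B Qn else amax A Qn)
     else if Rn = {} then (if Qn \<noteq> {} then amax A Qn else (SOME v. v \<in> Ln))
     else if Ln = {} then (if Qn \<noteq> {} then amax B Qn else (SOME v. v \<in> Rn))
     else if Qn \<noteq> {} then amax A Qn else if B s \<le> A s then (SOME v. v \<in> Rn) else (SOME v. v \<in> Ln))"

definition frt :: "point \<Rightarrow> point \<Rightarrow> point set \<Rightarrow> point" where
  "frt s t N = (let v = nxt s t N in if v \<in> N then v else (SOME v. v \<in> N))"

lemma frt_valid: "N \<noteq> {} \<Longrightarrow> frt s t N \<in> N"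
  unfolding frt_def Let_def by (auto intro: someI_ex)

locale rt =
  fixes P :: "point set" and t :: point and i :: nat
  assumes finP: "finite P" and gpP: "general_position P" and tP: "t \<in> P" and i3: "i < 3"
begin

definition ca where "ca v = cA (cone_start i) (v - t)"
definition cb where "cb v = cB (cone_start i) (v - t)"
definition hh where "hh v = ca v + cb v"

lemma cA_d: "cA (cone_start i) (q - p) = ca q - ca p"
proof -
  have "q - p = (q - t) - (p - t)" by simp
  then show ?thesis unfolding ca_def by (metis cA_lin(2))
qed
lemma cB_d: "cB (cone_start i) (q - p) = cb q - cb p"
proof -
  have "q - p = (q - t) - (p - t)" by simp
  then show ?thesis unfolding cb_def by (metis cB_lin(2))
qed

lemma cat: "ca t = 0" "cb t = 0"
  by (simp_all add: ca_def cb_def cA_def cB_def)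

lemma gp_ca: assumes "p \<in> P" "q \<in> P" "p \<noteq> q" shows "ca p \<noteq> ca q"
proof
  assume e: "ca p = ca q"
  have "q - p = cA (cone_start i) (q - p) *\<^sub>R ray_dir (cone_start i) + cB (cone_start i) (q - p) *\<^sub>R ray_dir (cone_start i + pi/3)"
    by (rule decomp)
  also have "cA (cone_start i) (q - p) = 0" using e by (simp add: cA_d)
  also have "cone_start i + pi/3 = real (2*i+2) * pi / 3" by (simp add: cone_start_def field_simps)
  finally have "q - p = cB (cone_start i) (q - p) *\<^sub>R ray_dir (real (2*i+2) * pi / 3)" by simp
  then show False using gpP assms unfolding general_position_def by blast
qed

lemma gp_cb: assumes "p \<in> P" "q \<in> P" "p \<noteq> q" shows "cb p \<noteq> cb q"
proof
  assume e: "cb p = cb q"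
  have "q - p = cA (cone_start i) (q - p) *\<^sub>R ray_dir (cone_start i) + cB (cone_start i) (q - p) *\<^sub>R ray_dir (cone_start i + pi/3)"
    by (rule decomp)
  also have "cB (cone_start i) (q - p) = 0" using e by (simp add: cB_d)
  finally have "q - p = cA (cone_start i) (q - p) *\<^sub>R ray_dir (cone_start i)" by simp
  then show False using gpP assms unfolding general_position_def cone_start_def by blast
qed

lemma pc0: "pos_cone i p q \<longleftrightarrow> ca q - ca p > 0 \<and> cb q - cb p > 0"
  by (simp add: pos_cone_def in_sector_iff cA_d cB_d)
lemma pd0: "proj_dist i p q = sqrt 3 / 2 * ((ca q - ca p) + (cb q - cb p))"
  by (simp add: proj_dist_def bisector_def bis0 cA_d cB_d)

lemma ex_j1: "\<exists>j<3. (\<forall>p q. pos_cone j p q \<longleftrightarrow> cb q - cb p > 0 \<and> (ca q - ca p) + (cb q - cb p) < 0)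
   \<and> (\<forall>p q. proj_dist j p q = - sqrt 3 / 2 * (ca q - ca p))"
proof -
  obtain j where j: "j < 3" "\<forall>\<phi>. ray_dir (cone_start j + \<phi>) = ray_dir (cone_start i + 2*pi/3 + \<phi>)"
    using rel_next[OF i3] by blast
  note c = sector_cong[OF j(2)]
  show ?thesis
    by (intro exI[of _ j] conjI allI j(1))
       (unfold pos_cone_def c(1) sec1 proj_dist_def bisector_def c(4) bis1 cA_d cB_d, simp_all)
qed

lemma ex_j2: "\<exists>j<3. (\<forall>p q. pos_cone j p q \<longleftrightarrow> ca q - ca p > 0 \<and> (ca q - ca p) + (cb q - cb p) < 0)
   \<and> (\<forall>p q. proj_dist j p q = - sqrt 3 / 2 * (cb q - cb p))"
proof -
  obtain j where j: "j < 3" "\<forall>\<phi>. ray_dir (cone_start j + \<phi>) = ray_dir (cone_start i + 2*pi/3 + 2*pi/3 + \<phi>)"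
    using rel_next2[OF i3] by blast
  note c = sector_cong[OF j(2)]
  show ?thesis
    by (intro exI[of _ j] conjI allI j(1))
       (unfold pos_cone_def c(1) sec2 proj_dist_def bisector_def c(4) bis2 cA_d cB_d, simp_all)
qed

lemma pc_cases: "j < 3 \<Longrightarrow>
   (j = i) \<or>
   ((\<forall>p q. pos_cone j p q \<longleftrightarrow> cb q - cb p > 0 \<and> (ca q - ca p) + (cb q - cb p) < 0)
     \<and> (\<forall>p q. proj_dist j p q = - sqrt 3 / 2 * (ca q - ca p))) \<or>
   ((\<forall>p q. pos_cone j p q \<longleftrightarrow> ca q - ca p > 0 \<and> (ca q - ca p) + (cb q - cb p) < 0)
     \<and> (\<forall>p q. proj_dist j p q = - sqrt 3 / 2 * (cb q - cb p)))"
proof -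
  assume j: "j < 3"
  from rel_all[OF i3 j] show ?thesis
  proof (elim disjE)
    assume "j = i" then show ?thesis by simp
  next
    assume r: "\<forall>\<phi>. ray_dir (cone_start j + \<phi>) = ray_dir (cone_start i + 2*pi/3 + \<phi>)"
    note c = sector_cong[OF r]
    show ?thesis
      by (rule disjI2, rule disjI1)
         (unfold pos_cone_def c(1) sec1 proj_dist_def bisector_def c(4) bis1 cA_d cB_d, simp)
  next
    assume r: "\<forall>\<phi>. ray_dir (cone_start j + \<phi>) = ray_dir (cone_start i + 2*pi/3 + 2*pi/3 + \<phi>)"
    note c = sector_cong[OF r]
    show ?thesis
      by (rule disjI2, rule disjI2)
         (unfold pos_cone_def c(1) sec2 proj_dist_def bisector_def c(4) bis2 cA_d cB_d, simp)
  qed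
qed


declare split_paired_All [simp del] split_paired_Ex [simp del]

lemma s3pos: "0 < sqrt 3 / (2::real)" by simp

definition undom where "undom s v \<longleftrightarrow> (\<forall>w\<in>P. ca v < ca w \<and> cb v < cb w \<longrightarrow> hh s \<le> hh w)"

lemma nbrQ: assumes sP: "s \<in> P" and lt: "ca v < ca s" "cb v < cb s"
  shows "v \<in> neighbours P s \<longleftrightarrow> v \<in> P \<and> undom s v"
proof
  assume "v \<in> neighbours P s"
  then have "half_theta6_edge P s v \<or> half_theta6_edge P v s" by (simp add: neighbours_def)
  then show "v \<in> P \<and> undom s v"
  proof
    assume "half_theta6_edge P s v"
    then obtain j where j: "j<3" "pos_cone j s v" unfolding half_theta6_edge_def by blast
    from pc_cases[OF j(1)] show ?thesis
    proof (elim disjE)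
      assume "j = i" then show ?thesis using j(2) lt by (simp add: pc0)
    next
      assume c: "(\<forall>p q. pos_cone j p q \<longleftrightarrow> cb q - cb p > 0 \<and> (ca q - ca p) + (cb q - cb p) < 0)
     \<and> (\<forall>p q. proj_dist j p q = - sqrt 3 / 2 * (ca q - ca p))"
      then show ?thesis using j(2) lt by auto
    next
      assume c: "(\<forall>p q. pos_cone j p q \<longleftrightarrow> ca q - ca p > 0 \<and> (ca q - ca p) + (cb q - cb p) < 0)
     \<and> (\<forall>p q. proj_dist j p q = - sqrt 3 / 2 * (cb q - cb p))"
      then show ?thesis using j(2) lt by auto
    qed
  next
    assume e: "half_theta6_edge P v s"
    then have vP: "v \<in> P" by (simp add: half_theta6_edge_def)
    obtain j where j: "j<3" "pos_cone j v s" "\<forall>v'\<in>P. pos_cone j v v' \<longrightarrow> proj_dist j v s \<le> proj_dist j v v'"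
      using e unfolding half_theta6_edge_def by blast
    have ji: "j = i"
    proof -
      from pc_cases[OF j(1)] show ?thesis
      proof (elim disjE)
        assume c: "(\<forall>p q. pos_cone j p q \<longleftrightarrow> cb q - cb p > 0 \<and> (ca q - ca p) + (cb q - cb p) < 0)
       \<and> (\<forall>p q. proj_dist j p q = - sqrt 3 / 2 * (ca q - ca p))"
        then show ?thesis using j(2) lt by auto
      next
        assume c: "(\<forall>p q. pos_cone j p q \<longleftrightarrow> ca q - ca p > 0 \<and> (ca q - ca p) + (cb q - cb p) < 0)
       \<and> (\<forall>p q. proj_dist j p q = - sqrt 3 / 2 * (cb q - cb p))"
        then show ?thesis using j(2) lt by auto
      qed simp
    qed
    have "undom s v" unfolding undom_def
    proof (intro ballI impI)
      fix w assume wP: "w \<in> P" and w: "ca v < ca w \<and> cb v < cb w"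
      have "pos_cone i v w" using w by (simp add: pc0)
      then have "proj_dist i v s \<le> proj_dist i v w" using j(3) wP ji by blast
      then have "sqrt 3 / 2 * ((ca s - ca v) + (cb s - cb v)) \<le> sqrt 3 / 2 * ((ca w - ca v) + (cb w - cb v))"
        by (simp add: pd0)
      then have "(ca s - ca v) + (cb s - cb v) \<le> (ca w - ca v) + (cb w - cb v)"
        using mult_le_cancel_left_pos[OF s3pos] by blast
      then show "hh s \<le> hh w" by (simp add: hh_def)
    qed
    then show ?thesis using vP by simp
  qed
next
  assume a: "v \<in> P \<and> undom s v"
  have "half_theta6_edge P v s"
    unfolding half_theta6_edge_def
  proof (intro conjI exI[of _ i])
    show "v \<in> P" "s \<in> P" "i < 3" using a sP i3 by auto
    show "pos_cone i v s" using lt by (simp add: pc0)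
    show "\<forall>v'\<in>P. pos_cone i v v' \<longrightarrow> proj_dist i v s \<le> proj_dist i v v'"
    proof (intro ballI impI)
      fix w assume wP: "w \<in> P" and "pos_cone i v w"
      then have w: "ca v < ca w \<and> cb v < cb w" by (simp add: pc0)
      then have "hh s \<le> hh w" using a wP unfolding undom_def by blast
      then have "(ca s - ca v) + (cb s - cb v) \<le> (ca w - ca v) + (cb w - cb v)" by (simp add: hh_def)
      then show "proj_dist i v s \<le> proj_dist i v w"
        unfolding pd0 using mult_le_cancel_left_pos[OF s3pos] by blast
    qed
  qed
  then show "v \<in> neighbours P s" by (simp add: neighbours_def)
qed

lemma nbrL: assumes sP: "s \<in> P" and lt: "cb s < cb v" "hh v < hh s"
  shows "v \<in> neighbours P s \<longleftrightarrow> v \<in> P \<and> (\<forall>w\<in>P. cb s < cb w \<and> hh w < hh s \<longrightarrow> ca w \<le> ca v)"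
proof
  assume "v \<in> neighbours P s"
  then have "half_theta6_edge P s v \<or> half_theta6_edge P v s" by (simp add: neighbours_def)
  then show "v \<in> P \<and> (\<forall>w\<in>P. cb s < cb w \<and> hh w < hh s \<longrightarrow> ca w \<le> ca v)"
  proof
    assume e: "half_theta6_edge P s v"
    then have vP: "v \<in> P" by (simp add: half_theta6_edge_def)
    obtain j where j: "j<3" "pos_cone j s v" "\<forall>v'\<in>P. pos_cone j s v' \<longrightarrow> proj_dist j s v \<le> proj_dist j s v'"
      using e unfolding half_theta6_edge_def by blast
    from pc_cases[OF j(1)] show ?thesis
    proof (elim disjE)
      assume "j = i" then show ?thesis using j(2) lt by (simp add: pc0 hh_def)
    next
      assume c: "(\<forall>p q. pos_cone j p q \<longleftrightarrow> cb q - cb p > 0 \<and> (ca q - ca p) + (cb q - cb p) < 0)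
     \<and> (\<forall>p q. proj_dist j p q = - sqrt 3 / 2 * (ca q - ca p))"
      have "\<forall>w\<in>P. cb s < cb w \<and> hh w < hh s \<longrightarrow> ca w \<le> ca v"
      proof (intro ballI impI)
        fix w assume wP: "w \<in> P" and w: "cb s < cb w \<and> hh w < hh s"
        have "pos_cone j s w" using c w by (simp add: hh_def)
        then have "proj_dist j s v \<le> proj_dist j s w" using j(3) wP by blast
        then have "- sqrt 3 / 2 * (ca v - ca s) \<le> - sqrt 3 / 2 * (ca w - ca s)" using c by simp
        then have "sqrt 3 / 2 * (ca w - ca s) \<le> sqrt 3 / 2 * (ca v - ca s)" by simp
        then have "ca w - ca s \<le> ca v - ca s" using mult_le_cancel_left_pos[OF s3pos] by blast
        then show "ca w \<le> ca v" by simp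
      qed
      then show ?thesis using vP by simp
    next
      assume c: "(\<forall>p q. pos_cone j p q \<longleftrightarrow> ca q - ca p > 0 \<and> (ca q - ca p) + (cb q - cb p) < 0)
     \<and> (\<forall>p q. proj_dist j p q = - sqrt 3 / 2 * (cb q - cb p))"
      then show ?thesis using j(2) lt by auto
    qed
  next
    assume e: "half_theta6_edge P v s"
    obtain j where j: "j<3" "pos_cone j v s"
      using e unfolding half_theta6_edge_def by blast
    from pc_cases[OF j(1)] show ?thesis
    proof (elim disjE)
      assume "j = i" then show ?thesis using j(2) lt by (simp add: pc0 hh_def)
    next
      assume c: "(\<forall>p q. pos_cone j p q \<longleftrightarrow> cb q - cb p > 0 \<and> (ca q - ca p) + (cb q - cb p) < 0)
     \<and> (\<forall>p q. proj_dist j p q = - sqrt 3 / 2 * (ca q - ca p))"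
      then show ?thesis using j(2) lt by (auto simp: hh_def)
    next
      assume c: "(\<forall>p q. pos_cone j p q \<longleftrightarrow> ca q - ca p > 0 \<and> (ca q - ca p) + (cb q - cb p) < 0)
     \<and> (\<forall>p q. proj_dist j p q = - sqrt 3 / 2 * (cb q - cb p))"
      then show ?thesis using j(2) lt by (auto simp: hh_def)
    qed
  qed
next
  assume a: "v \<in> P \<and> (\<forall>w\<in>P. cb s < cb w \<and> hh w < hh s \<longrightarrow> ca w \<le> ca v)"
  obtain j where j: "j < 3" "\<forall>p q. pos_cone j p q \<longleftrightarrow> cb q - cb p > 0 \<and> (ca q - ca p) + (cb q - cb p) < 0"
     "\<forall>p q. proj_dist j p q = - sqrt 3 / 2 * (ca q - ca p)" using ex_j1 by blast
  have "half_theta6_edge P s v"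
    unfolding half_theta6_edge_def
  proof (intro conjI exI[of _ j])
    show "v \<in> P" "s \<in> P" "j < 3" using a sP j by auto
    show "pos_cone j s v" using lt j(2) by (simp add: hh_def)
    show "\<forall>v'\<in>P. pos_cone j s v' \<longrightarrow> proj_dist j s v \<le> proj_dist j s v'"
    proof (intro ballI impI)
      fix w assume wP: "w \<in> P" and "pos_cone j s w"
      then have w: "cb s < cb w \<and> hh w < hh s" using j(2) by (simp add: hh_def)
      then have "ca w \<le> ca v" using a wP by blast
      then have "sqrt 3 / 2 * (ca w - ca s) \<le> sqrt 3 / 2 * (ca v - ca s)"
        using mult_le_cancel_left_pos[OF s3pos] by simp
      then show "proj_dist j s v \<le> proj_dist j s w" using j(3) by simp
    qed
  qed
  then show "v \<in> neighbours P s" by (simp add: neighbours_def)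
qed

lemma nbrR: assumes sP: "s \<in> P" and lt: "ca s < ca v" "hh v < hh s"
  shows "v \<in> neighbours P s \<longleftrightarrow> v \<in> P \<and> (\<forall>w\<in>P. ca s < ca w \<and> hh w < hh s \<longrightarrow> cb w \<le> cb v)"
proof
  assume "v \<in> neighbours P s"
  then have "half_theta6_edge P s v \<or> half_theta6_edge P v s" by (simp add: neighbours_def)
  then show "v \<in> P \<and> (\<forall>w\<in>P. ca s < ca w \<and> hh w < hh s \<longrightarrow> cb w \<le> cb v)"
  proof
    assume e: "half_theta6_edge P s v"
    then have vP: "v \<in> P" by (simp add: half_theta6_edge_def)
    obtain j where j: "j<3" "pos_cone j s v" "\<forall>v'\<in>P. pos_cone j s v' \<longrightarrow> proj_dist j s v \<le> proj_dist j s v'"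
      using e unfolding half_theta6_edge_def by blast
    from pc_cases[OF j(1)] show ?thesis
    proof (elim disjE)
      assume "j = i" then show ?thesis using j(2) lt by (simp add: pc0 hh_def)
    next
      assume c: "(\<forall>p q. pos_cone j p q \<longleftrightarrow> cb q - cb p > 0 \<and> (ca q - ca p) + (cb q - cb p) < 0)
     \<and> (\<forall>p q. proj_dist j p q = - sqrt 3 / 2 * (ca q - ca p))"
      then show ?thesis using j(2) lt by auto
    next
      assume c: "(\<forall>p q. pos_cone j p q \<longleftrightarrow> ca q - ca p > 0 \<and> (ca q - ca p) + (cb q - cb p) < 0)
     \<and> (\<forall>p q. proj_dist j p q = - sqrt 3 / 2 * (cb q - cb p))"
      have "\<forall>w\<in>P. ca s < ca w \<and> hh w < hh s \<longrightarrow> cb w \<le> cb v"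
      proof (intro ballI impI)
        fix w assume wP: "w \<in> P" and w: "ca s < ca w \<and> hh w < hh s"
        have "pos_cone j s w" using c w by (simp add: hh_def)
        then have "proj_dist j s v \<le> proj_dist j s w" using j(3) wP by blast
        then have "- sqrt 3 / 2 * (cb v - cb s) \<le> - sqrt 3 / 2 * (cb w - cb s)" using c by simp
        then have "sqrt 3 / 2 * (cb w - cb s) \<le> sqrt 3 / 2 * (cb v - cb s)" by simp
        then have "cb w - cb s \<le> cb v - cb s" using mult_le_cancel_left_pos[OF s3pos] by blast
        then show "cb w \<le> cb v" by simp
      qed
      then show ?thesis using vP by simp
    qed
  next
    assume e: "half_theta6_edge P v s"
    obtain j where j: "j<3" "pos_cone j v s"
      using e unfolding half_theta6_edge_def by blast
    from pc_cases[OF j(1)] show ?thesis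
    proof (elim disjE)
      assume "j = i" then show ?thesis using j(2) lt by (simp add: pc0 hh_def)
    next
      assume c: "(\<forall>p q. pos_cone j p q \<longleftrightarrow> cb q - cb p > 0 \<and> (ca q - ca p) + (cb q - cb p) < 0)
     \<and> (\<forall>p q. proj_dist j p q = - sqrt 3 / 2 * (ca q - ca p))"
      then show ?thesis using j(2) lt by (auto simp: hh_def)
    next
      assume c: "(\<forall>p q. pos_cone j p q \<longleftrightarrow> ca q - ca p > 0 \<and> (ca q - ca p) + (cb q - cb p) < 0)
     \<and> (\<forall>p q. proj_dist j p q = - sqrt 3 / 2 * (cb q - cb p))"
      then show ?thesis using j(2) lt by (auto simp: hh_def)
    qed
  qed
next
  assume a: "v \<in> P \<and> (\<forall>w\<in>P. ca s < ca w \<and> hh w < hh s \<longrightarrow> cb w \<le> cb v)"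
  obtain j where j: "j < 3" "\<forall>p q. pos_cone j p q \<longleftrightarrow> ca q - ca p > 0 \<and> (ca q - ca p) + (cb q - cb p) < 0"
     "\<forall>p q. proj_dist j p q = - sqrt 3 / 2 * (cb q - cb p)" using ex_j2 by blast
  have "half_theta6_edge P s v"
    unfolding half_theta6_edge_def
  proof (intro conjI exI[of _ j])
    show "v \<in> P" "s \<in> P" "j < 3" using a sP j by auto
    show "pos_cone j s v" using lt j(2) by (simp add: hh_def)
    show "\<forall>v'\<in>P. pos_cone j s v' \<longrightarrow> proj_dist j s v \<le> proj_dist j s v'"
    proof (intro ballI impI)
      fix w assume wP: "w \<in> P" and "pos_cone j s w"
      then have w: "ca s < ca w \<and> hh w < hh s" using j(2) by (simp add: hh_def)
      then have "cb w \<le> cb v" using a wP by blast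
      then have "sqrt 3 / 2 * (cb w - cb s) \<le> sqrt 3 / 2 * (cb v - cb s)"
        using mult_le_cancel_left_pos[OF s3pos] by simp
      then show "proj_dist j s v \<le> proj_dist j s w" using j(3) by simp
    qed
  qed
  then show "v \<in> neighbours P s" by (simp add: neighbours_def)
qed

end



context rt begin

definition Kp where "Kp z \<longleftrightarrow> z \<in> P \<and> 0 \<le> ca z \<and> 0 \<le> cb z"
definition Rempty where "Rempty s \<longleftrightarrow> (\<forall>z. Kp z \<and> hh z < hh s \<longrightarrow> ca z \<le> ca s)"
definition Lempty where "Lempty s \<longleftrightarrow> (\<forall>z. Kp z \<and> hh z < hh s \<longrightarrow> cb z \<le> cb s)"
definition QN where "QN s = {v \<in> neighbours P s. 0 \<le> ca v \<and> 0 \<le> cb v \<and> ca v < ca s \<and> cb v < cb s}"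
definition LN where "LN s = {v \<in> neighbours P s. 0 \<le> ca v \<and> cb s < cb v \<and> ca v + cb v < ca s + cb s}"
definition RN where "RN s = {v \<in> neighbours P s. 0 \<le> cb v \<and> ca s < ca v \<and> ca v + cb v < ca s + cb s}"

lemma nb_sub: "neighbours P s \<subseteq> P"
  by (auto simp: neighbours_def half_theta6_edge_def)

lemma fin_nb: "finite (neighbours P s)" using finite_subset[OF nb_sub finP] .

lemma QN_iff: "s \<in> P \<Longrightarrow> v \<in> QN s \<longleftrightarrow> v \<in> P \<and> 0 \<le> ca v \<and> 0 \<le> cb v \<and> ca v < ca s \<and> cb v < cb s \<and> undom s v"
  using nbrQ[of s v] by (auto simp: QN_def)
lemma LN_iff: "s \<in> P \<Longrightarrow> v \<in> LN s \<longleftrightarrow> v \<in> P \<and> 0 \<le> ca v \<and> cb s < cb v \<and> hh v < hh s \<and> (\<forall>w\<in>P. cb s < cb w \<and> hh w < hh s \<longrightarrow> ca w \<le> ca v)"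
  using nbrL[of s v] by (auto simp: LN_def hh_def)
lemma RN_iff: "s \<in> P \<Longrightarrow> v \<in> RN s \<longleftrightarrow> v \<in> P \<and> 0 \<le> cb v \<and> ca s < ca v \<and> hh v < hh s \<and> (\<forall>w\<in>P. ca s < ca w \<and> hh w < hh s \<longrightarrow> cb w \<le> cb v)"
  using nbrR[of s v] by (auto simp: RN_def hh_def)

lemma fin_QN: "finite (QN s)" unfolding QN_def using fin_nb by simp
lemma QN_sub: "QN s \<subseteq> neighbours P s" unfolding QN_def by auto
lemma LN_sub: "LN s \<subseteq> neighbours P s" unfolding LN_def by auto
lemma RN_sub: "RN s \<subseteq> neighbours P s" unfolding RN_def by auto

lemma LN_empty: assumes sP: "s \<in> P" and b0: "0 \<le> cb s" shows "LN s = {} \<longleftrightarrow> Lempty s"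
proof
  assume e: "LN s = {}"
  show "Lempty s" unfolding Lempty_def
  proof (intro allI impI, rule ccontr)
    fix z assume z: "Kp z \<and> hh z < hh s" and nz: "\<not> cb z \<le> cb s"
    define S where "S = {w \<in> P. cb s < cb w \<and> hh w < hh s}"
    have "finite S" unfolding S_def using finP by simp
    moreover have zS: "z \<in> S" using z nz by (auto simp: S_def Kp_def)
    ultimately obtain r where r: "r \<in> S" "\<forall>w\<in>S. ca w \<le> ca r" using ex_max[of S ca] by blast
    have "ca z \<le> ca r" using r zS by blast
    then have "r \<in> LN s" using r z LN_iff[OF sP, of r] by (auto simp: S_def Kp_def)
    then show False using e by simp
  qed
next
  assume L: "Lempty s"
  show "LN s = {}"
  proof (rule ccontr)
    assume "LN s \<noteq> {}"
    then obtain v where v: "v \<in> LN s" by blast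
    then have "v \<in> P" "0 \<le> ca v" "cb s < cb v" "hh v < hh s" using LN_iff[OF sP] by auto
    then show False using L b0 unfolding Lempty_def Kp_def by force
  qed
qed

lemma RN_empty: assumes sP: "s \<in> P" and a0: "0 \<le> ca s" shows "RN s = {} \<longleftrightarrow> Rempty s"
proof
  assume e: "RN s = {}"
  show "Rempty s" unfolding Rempty_def
  proof (intro allI impI, rule ccontr)
    fix z assume z: "Kp z \<and> hh z < hh s" and nz: "\<not> ca z \<le> ca s"
    define S where "S = {w \<in> P. ca s < ca w \<and> hh w < hh s}"
    have "finite S" unfolding S_def using finP by simp
    moreover have zS: "z \<in> S" using z nz by (auto simp: S_def Kp_def)
    ultimately obtain r where r: "r \<in> S" "\<forall>w\<in>S. cb w \<le> cb r" using ex_max[of S cb] by blast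
    have "cb z \<le> cb r" using r zS by blast
    then have "r \<in> RN s" using r z RN_iff[OF sP, of r] by (auto simp: S_def Kp_def)
    then show False using e by simp
  qed
next
  assume R: "Rempty s"
  show "RN s = {}"
  proof (rule ccontr)
    assume "RN s \<noteq> {}"
    then obtain v where v: "v \<in> RN s" by blast
    then have "v \<in> P" "0 \<le> cb v" "ca s < ca v" "hh v < hh s" using RN_iff[OF sP] by auto
    then show False using R a0 unfolding Rempty_def Kp_def by force
  qed
qed

lemma dom: assumes zP: "z \<in> P" and hz: "hh z < hh s"
  shows "\<exists>w\<in>P. hh w < hh s \<and> ca z \<le> ca w \<and> cb z \<le> cb w \<and> undom s w"
proof -
  define S where "S = {w \<in> P. hh w < hh s \<and> ca z \<le> ca w \<and> cb z \<le> cb w}"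
  have "finite S" unfolding S_def using finP by simp
  moreover have zS: "z \<in> S" using zP hz by (auto simp: S_def)
  ultimately obtain w where w: "w \<in> S" "\<forall>w'\<in>S. hh w' \<le> hh w" using ex_max[of S hh] by blast
  have "undom s w" unfolding undom_def
  proof (intro ballI impI, rule ccontr)
    fix w' assume w'P: "w' \<in> P" and d: "ca w < ca w' \<and> cb w < cb w'" and n: "\<not> hh s \<le> hh w'"
    have "w' \<in> S" using w'P d n w(1) by (auto simp: S_def)
    then have "hh w' \<le> hh w" using w(2) by blast
    then show False using d by (simp add: hh_def)
  qed
  then show ?thesis using w(1) by (auto simp: S_def)
qed

lemma F2: assumes sP: "s \<in> P" and RE: "Rempty s" and qQ: "q \<in> QN s" and mx: "\<forall>v\<in>QN s. ca v \<le> ca q"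
  shows "Rempty q"
  unfolding Rempty_def
proof (intro allI impI, rule ccontr)
  fix z assume z: "Kp z \<and> hh z < hh q" and nz: "\<not> ca z \<le> ca q"
  have q: "q \<in> P" "0 \<le> ca q" "0 \<le> cb q" "ca q < ca s" "cb q < cb s" "undom s q" using QN_iff[OF sP] qQ by auto
  have hq: "hh q < hh s" using q by (simp add: hh_def)
  have zP: "z \<in> P" and z0: "0 \<le> ca z" "0 \<le> cb z" using z by (auto simp: Kp_def)
  obtain w where w: "w \<in> P" "hh w < hh s" "ca z \<le> ca w" "cb z \<le> cb w" "undom s w"
    using dom[OF zP, of s] z hq by force
  show False
  proof (cases "cb q < cb w")
    case True
    then have "hh s \<le> hh w" using q(6) w nz unfolding undom_def by auto
    then show False using w(2) by simp
  next
    case False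
    have Kw: "Kp w" using w z0 by (auto simp: Kp_def)
    have "ca w \<le> ca s" using RE Kw w(2) unfolding Rempty_def by blast
    moreover have "w \<noteq> s" using w(2) by auto
    then have "ca w \<noteq> ca s" using gp_ca w(1) sP by blast
    ultimately have "ca w < ca s" by simp
    then have "w \<in> QN s" using QN_iff[OF sP] w Kw False q by (auto simp: Kp_def)
    then have "ca w \<le> ca q" using mx by blast
    then show False using nz w(3) by simp
  qed
qed

lemma F2': assumes sP: "s \<in> P" and LE: "Lempty s" and qQ: "q \<in> QN s" and mx: "\<forall>v\<in>QN s. cb v \<le> cb q"
  shows "Lempty q"
  unfolding Lempty_def
proof (intro allI impI, rule ccontr)
  fix z assume z: "Kp z \<and> hh z < hh q" and nz: "\<not> cb z \<le> cb q"
  have q: "q \<in> P" "0 \<le> ca q" "0 \<le> cb q" "ca q < ca s" "cb q < cb s" "undom s q" using QN_iff[OF sP] qQ by auto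
  have hq: "hh q < hh s" using q by (simp add: hh_def)
  have zP: "z \<in> P" and z0: "0 \<le> ca z" "0 \<le> cb z" using z by (auto simp: Kp_def)
  obtain w where w: "w \<in> P" "hh w < hh s" "ca z \<le> ca w" "cb z \<le> cb w" "undom s w"
    using dom[OF zP, of s] z hq by force
  show False
  proof (cases "ca q < ca w")
    case True
    then have "hh s \<le> hh w" using q(6) w nz unfolding undom_def by auto
    then show False using w(2) by simp
  next
    case False
    have Kw: "Kp w" using w z0 by (auto simp: Kp_def)
    have "cb w \<le> cb s" using LE Kw w(2) unfolding Lempty_def by blast
    moreover have "w \<noteq> s" using w(2) by auto
    then have "cb w \<noteq> cb s" using gp_cb w(1) sP by blast
    ultimately have "cb w < cb s" by simp
    then have "w \<in> QN s" using QN_iff[OF sP] w Kw False q by (auto simp: Kp_def)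
    then have "cb w \<le> cb q" using mx by blast
    then show False using nz w(4) by simp
  qed
qed

lemma F3: assumes sP: "s \<in> P" and RE: "Rempty s" and QE: "QN s = {}" and rL: "r \<in> LN s"
  shows "Rempty r"
  unfolding Rempty_def
proof (intro allI impI, rule ccontr)
  fix z assume z: "Kp z \<and> hh z < hh r" and nz: "\<not> ca z \<le> ca r"
  have r: "r \<in> P" "0 \<le> ca r" "cb s < cb r" "hh r < hh s" "\<forall>w\<in>P. cb s < cb w \<and> hh w < hh s \<longrightarrow> ca w \<le> ca r"
    using LN_iff[OF sP] rL by auto
  have zP: "z \<in> P" and z0: "0 \<le> ca z" "0 \<le> cb z" using z by (auto simp: Kp_def)
  obtain w where w: "w \<in> P" "hh w < hh s" "ca z \<le> ca w" "cb z \<le> cb w" "undom s w"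
    using dom[OF zP, of s] z r(4) by force
  show False
  proof (cases "cb s < cb w")
    case True
    then have "ca w \<le> ca r" using r(5) w by blast
    then show False using nz w(3) by simp
  next
    case False
    have Kw: "Kp w" using w z0 by (auto simp: Kp_def)
    have ws: "w \<noteq> s" using w(2) by auto
    have "ca w \<le> ca s" using RE Kw w(2) unfolding Rempty_def by blast
    moreover have "ca w \<noteq> ca s" using gp_ca w(1) sP ws by blast
    ultimately have "ca w < ca s" by simp
    moreover have "cb w \<noteq> cb s" using gp_cb w(1) sP ws by blast
    then have "cb w < cb s" using False by simp
    ultimately have "w \<in> QN s" using QN_iff[OF sP] w Kw by (auto simp: Kp_def)
    then show False using QE by simp
  qed
qed

lemma F3': assumes sP: "s \<in> P" and LE: "Lempty s" and QE: "QN s = {}" and rR: "r \<in> RN s"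
  shows "Lempty r"
  unfolding Lempty_def
proof (intro allI impI, rule ccontr)
  fix z assume z: "Kp z \<and> hh z < hh r" and nz: "\<not> cb z \<le> cb r"
  have r: "r \<in> P" "0 \<le> cb r" "ca s < ca r" "hh r < hh s" "\<forall>w\<in>P. ca s < ca w \<and> hh w < hh s \<longrightarrow> cb w \<le> cb r"
    using RN_iff[OF sP] rR by auto
  have zP: "z \<in> P" and z0: "0 \<le> ca z" "0 \<le> cb z" using z by (auto simp: Kp_def)
  obtain w where w: "w \<in> P" "hh w < hh s" "ca z \<le> ca w" "cb z \<le> cb w" "undom s w"
    using dom[OF zP, of s] z r(4) by force
  show False
  proof (cases "ca s < ca w")
    case True
    then have "cb w \<le> cb r" using r(5) w by blast
    then show False using nz w(4) by simp
  next
    case False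
    have Kw: "Kp w" using w z0 by (auto simp: Kp_def)
    have ws: "w \<noteq> s" using w(2) by auto
    have "cb w \<le> cb s" using LE Kw w(2) unfolding Lempty_def by blast
    moreover have "cb w \<noteq> cb s" using gp_cb w(1) sP ws by blast
    ultimately have "cb w < cb s" by simp
    moreover have "ca w \<noteq> ca s" using gp_ca w(1) sP ws by blast
    then have "ca w < ca s" using False by simp
    ultimately have "w \<in> QN s" using QN_iff[OF sP] w Kw by (auto simp: Kp_def)
    then show False using QE by simp
  qed
qed

lemma F1: assumes sP: "s \<in> P" and hs: "0 < hh s" and RE: "Rempty s" and LE: "Lempty s"
  shows "QN s \<noteq> {}"
proof -
  have "hh t < hh s" using hs cat by (simp add: hh_def)
  then obtain w where w: "w \<in> P" "hh w < hh s" "ca t \<le> ca w" "cb t \<le> cb w" "undom s w"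
    using dom[OF tP, of s] by force
  have Kw: "Kp w" using w cat by (auto simp: Kp_def)
  have ws: "w \<noteq> s" using w(2) by auto
  have "ca w \<le> ca s" using RE Kw w(2) unfolding Rempty_def by blast
  moreover have "ca w \<noteq> ca s" using gp_ca w(1) sP ws by blast
  ultimately have a: "ca w < ca s" by simp
  have "cb w \<le> cb s" using LE Kw w(2) unfolding Lempty_def by blast
  moreover have "cb w \<noteq> cb s" using gp_cb w(1) sP ws by blast
  ultimately have b: "cb w < cb s" by simp
  have "w \<in> QN s" using QN_iff[OF sP] w Kw a b by (auto simp: Kp_def)
  then show ?thesis by blast
qed

end



context rt begin

lemma SOME_i: assumes a: "0 < ca s" and b: "0 < cb s" shows "(SOME j. j < 3 \<and> pos_cone j t s) = i"
proof (rule some_equality)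
  show "i < 3 \<and> pos_cone i t s" using i3 a b cat by (simp add: pc0)
next
  fix j assume j: "j < 3 \<and> pos_cone j t s"
  have j3: "j < 3" using j by simp
  from pc_cases[OF j3] show "j = i"
  proof (elim disjE)
    assume "j = i" then show ?thesis .
  next
    assume c: "(\<forall>p q. pos_cone j p q \<longleftrightarrow> cb q - cb p > 0 \<and> (ca q - ca p) + (cb q - cb p) < 0)
     \<and> (\<forall>p q. proj_dist j p q = - sqrt 3 / 2 * (ca q - ca p))"
    then have "cb s - cb t > 0 \<and> (ca s - ca t) + (cb s - cb t) < 0" using j by blast
    then show ?thesis using a b cat by simp
  next
    assume c: "(\<forall>p q. pos_cone j p q \<longleftrightarrow> ca q - ca p > 0 \<and> (ca q - ca p) + (cb q - cb p) < 0)
     \<and> (\<forall>p q. proj_dist j p q = - sqrt 3 / 2 * (cb q - cb p))"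
    then have "ca s - ca t > 0 \<and> (ca s - ca t) + (cb s - cb t) < 0" using j by blast
    then show ?thesis using a b cat by simp
  qed
qed

lemma nxt_eq: assumes a: "0 < ca s" and b: "0 < cb s"
  shows "nxt s t (neighbours P s) = (if RN s = {} \<and> LN s = {} then (if cb s \<le> ca s then amax cb (QN s) else amax ca (QN s))
     else if RN s = {} then (if QN s \<noteq> {} then amax ca (QN s) else (SOME v. v \<in> LN s))
     else if LN s = {} then (if QN s \<noteq> {} then amax cb (QN s) else (SOME v. v \<in> RN s))
     else if QN s \<noteq> {} then amax ca (QN s) else if cb s \<le> ca s then (SOME v. v \<in> RN s) else (SOME v. v \<in> LN s))"
proof -
  have eA: "(\<lambda>v. cA (cone_start i) (v - t)) = ca" by (rule ext) (simp add: ca_def)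
  have eB: "(\<lambda>v. cB (cone_start i) (v - t)) = cb" by (rule ext) (simp add: cb_def)
  show ?thesis
    unfolding nxt_def Let_def SOME_i[OF a b] eA eB ca_def[symmetric] cb_def[symmetric] QN_def LN_def RN_def
    by (rule refl)
qed

definition Vb where "Vb s = (if Rempty s \<and> Lempty s then min (2*ca s + cb s) (ca s + 2*cb s)
   else if Rempty s then 2*ca s + cb s else if Lempty s then ca s + 2*cb s
   else 2*ca s + 2*cb s + min (ca s) (cb s))"

lemma Vb_B: "0 \<le> ca s \<Longrightarrow> 0 \<le> cb s \<Longrightarrow> Vb s \<le> 2*ca s + 2*cb s + min (ca s) (cb s)"
  by (auto simp: Vb_def min_def)
lemma Vb_R: "Rempty s \<Longrightarrow> Vb s \<le> 2*ca s + cb s"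
  by (auto simp: Vb_def min_def)
lemma Vb_L: "Lempty s \<Longrightarrow> Vb s \<le> ca s + 2*cb s"
  by (auto simp: Vb_def min_def)
lemma Vb_t: "Vb t = 0"
proof -
  have "Rempty t" "Lempty t" unfolding Rempty_def Lempty_def Kp_def hh_def using cat by auto
  then show ?thesis unfolding Vb_def using cat by simp
qed

lemma dist_c: "dist s n = sqrt ((ca n - ca s)^2 + (ca n - ca s) * (cb n - cb s) + (cb n - cb s)^2)"
proof -
  have "dist s n = norm (n - s)" by (simp add: dist_norm norm_minus_commute)
  also have "\<dots> = sqrt ((cA (cone_start i) (n - s))^2 + cA (cone_start i) (n - s) * cB (cone_start i) (n - s) + (cB (cone_start i) (n - s))^2)"
    by (rule norm_coord)
  finally show ?thesis by (simp add: cA_d cB_d)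
qed

lemma sqrt_le_lin: "0 \<le> y \<Longrightarrow> x \<le> y^2 \<Longrightarrow> sqrt x \<le> (y::real)"
  using real_sqrt_le_mono[of x "y^2"] by simp

lemma costQ: "da \<le> 0 \<Longrightarrow> db \<le> 0 \<Longrightarrow> sqrt (da^2 + da * db + db^2) \<le> - da - (db::real)"
  by (rule sqrt_le_lin) (auto simp: power2_eq_square algebra_simps intro: mult_nonpos_nonpos)
lemma costR: "0 \<le> da \<Longrightarrow> da + db \<le> 0 \<Longrightarrow> sqrt (da^2 + da * db + db^2) \<le> - (db::real)"
proof (rule sqrt_le_lin)
  assume "0 \<le> da" "da + db \<le> 0"
  then have "da * (da + db) \<le> 0" by (rule mult_nonneg_nonpos)
  then show "da^2 + da * db + db^2 \<le> (- db)^2" by (simp add: power2_eq_square algebra_simps)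
qed simp
lemma costL: "0 \<le> db \<Longrightarrow> da + db \<le> 0 \<Longrightarrow> sqrt (da^2 + da * db + db^2) \<le> - (da::real)"
proof (rule sqrt_le_lin)
  assume "0 \<le> db" "da + db \<le> 0"
  then have "db * (da + db) \<le> 0" by (rule mult_nonneg_nonpos)
  then show "da^2 + da * db + db^2 \<le> (- da)^2" by (simp add: power2_eq_square algebra_simps)
qed simp

lemma frt_eq: "c \<in> neighbours P s \<Longrightarrow> nxt s t (neighbours P s) = c \<Longrightarrow> frt s t (neighbours P s) = c"
  by (simp add: frt_def)


lemma step: assumes sP: "s \<in> P" and a: "0 < ca s" and b: "0 < cb s"
  shows "\<exists>n. frt s t (neighbours P s) = n \<and> Kp n \<and> hh n < hh s \<and> dist s n + Vb n \<le> Vb s"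
proof -
  note ne = nxt_eq[OF a b]
  have RE: "RN s = {} \<longleftrightarrow> Rempty s" using RN_empty[OF sP] a by simp
  have LE: "LN s = {} \<longleftrightarrow> Lempty s" using LN_empty[OF sP] b by simp
  have hs: "0 < hh s" using a b by (simp add: hh_def)
  have memQ: "Kp c \<and> hh c < hh s \<and> dist s c \<le> (ca s - ca c) + (cb s - cb c) \<and> c \<in> neighbours P s
      \<and> ca c < ca s \<and> cb c < cb s" if c: "c \<in> QN s" for c
  proof -
    have h: "c \<in> P" "0 \<le> ca c" "0 \<le> cb c" "ca c < ca s" "cb c < cb s" using QN_iff[OF sP] c by auto
    have "dist s c \<le> - (ca c - ca s) - (cb c - cb s)" unfolding dist_c by (rule costQ) (use h in auto)
    then show ?thesis using h c QN_sub[of s] by (auto simp: Kp_def hh_def)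
  qed
  have memL: "Kp c \<and> hh c < hh s \<and> dist s c \<le> ca s - ca c \<and> c \<in> neighbours P s" if c: "c \<in> LN s" for c
  proof -
    have h: "c \<in> P" "0 \<le> ca c" "cb s < cb c" "hh c < hh s" using LN_iff[OF sP] c by auto
    have "dist s c \<le> - (ca c - ca s)" unfolding dist_c by (rule costL) (use h in \<open>auto simp: hh_def\<close>)
    then show ?thesis using h c LN_sub[of s] b by (auto simp: Kp_def)
  qed
  have memR: "Kp c \<and> hh c < hh s \<and> dist s c \<le> cb s - cb c \<and> c \<in> neighbours P s" if c: "c \<in> RN s" for c
  proof -
    have h: "c \<in> P" "0 \<le> cb c" "ca s < ca c" "hh c < hh s" using RN_iff[OF sP] c by auto
    have "dist s c \<le> - (cb c - cb s)" unfolding dist_c by (rule costR) (use h in \<open>auto simp: hh_def\<close>)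
    then show ?thesis using h c RN_sub[of s] a by (auto simp: Kp_def)
  qed
  have KB: "Vb c \<le> 2*ca c + 2*cb c + min (ca c) (cb c)" if "Kp c" for c
    using Vb_B that by (auto simp: Kp_def)
  consider (A) "RN s = {} \<and> LN s = {}" | (B) "RN s = {} \<and> LN s \<noteq> {}" | (C) "RN s \<noteq> {} \<and> LN s = {}"
    | (D) "RN s \<noteq> {} \<and> LN s \<noteq> {}" by blast
  then show ?thesis
  proof cases
    case A
    then have R: "Rempty s" and L: "Lempty s" using RE LE by auto
    have Vs: "Vb s = min (2*ca s + cb s) (ca s + 2*cb s)" using R L by (simp add: Vb_def)
    have Qne: "QN s \<noteq> {}" using F1[OF sP hs R L] .
    show ?thesis
    proof (cases "cb s \<le> ca s")
      case True
      define c where "c = amax cb (QN s)"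
      have cm: "c \<in> QN s \<and> (\<forall>w\<in>QN s. cb w \<le> cb c)" unfolding c_def using amax[OF fin_QN Qne] .
      have nx: "nxt s t (neighbours P s) = c" using ne A True by (simp add: c_def)
      have Lc: "Lempty c" using F2'[OF sP L] cm by blast
      note m = memQ[of c]
      have V: "Vb s = ca s + 2*cb s" using Vs True by (simp add: min_def)
      have "Vb c \<le> ca c + 2*cb c" using Vb_L[OF Lc] .
      then have "dist s c + Vb c \<le> Vb s" using m cm V by linarith
      then show ?thesis using frt_eq[OF _ nx] m cm by blast
    next
      case False
      define c where "c = amax ca (QN s)"
      have cm: "c \<in> QN s \<and> (\<forall>w\<in>QN s. ca w \<le> ca c)" unfolding c_def using amax[OF fin_QN Qne] .
      have nx: "nxt s t (neighbours P s) = c" using ne A False by (simp add: c_def)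
      have Rc: "Rempty c" using F2[OF sP R] cm by blast
      note m = memQ[of c]
      have V: "Vb s = 2*ca s + cb s" using Vs False by (simp add: min_def)
      have "Vb c \<le> 2*ca c + cb c" using Vb_R[OF Rc] .
      then have "dist s c + Vb c \<le> Vb s" using m cm V by linarith
      then show ?thesis using frt_eq[OF _ nx] m cm by blast
    qed
  next
    case B
    then have R: "Rempty s" and L: "\<not> Lempty s" using RE LE by auto
    have V: "Vb s = 2*ca s + cb s" using R L by (simp add: Vb_def)
    show ?thesis
    proof (cases "QN s = {}")
      case False
      define c where "c = amax ca (QN s)"
      have cm: "c \<in> QN s \<and> (\<forall>w\<in>QN s. ca w \<le> ca c)" unfolding c_def using amax[OF fin_QN False] .
      have nx: "nxt s t (neighbours P s) = c" using ne B False by (simp add: c_def)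
      have Rc: "Rempty c" using F2[OF sP R] cm by blast
      note m = memQ[of c]
      have "Vb c \<le> 2*ca c + cb c" using Vb_R[OF Rc] .
      then have "dist s c + Vb c \<le> Vb s" using m cm V by linarith
      then show ?thesis using frt_eq[OF _ nx] m cm by blast
    next
      case True
      define c where "c = (SOME v. v \<in> LN s)"
      have cm: "c \<in> LN s" unfolding c_def using B by (auto intro: someI_ex)
      have nx: "nxt s t (neighbours P s) = c" using ne B True by (simp add: c_def)
      have Rc: "Rempty c" using F3[OF sP R True cm] .
      note m = memL[OF cm]
      have "Vb c \<le> 2*ca c + cb c" using Vb_R[OF Rc] .
      then have "dist s c + Vb c \<le> Vb s" using m V by (simp add: hh_def)
      then show ?thesis using frt_eq[OF _ nx] m by blast
    qed
  next
    case C
    then have R: "\<not> Rempty s" and L: "Lempty s" using RE LE by auto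
    have V: "Vb s = ca s + 2*cb s" using R L by (simp add: Vb_def)
    show ?thesis
    proof (cases "QN s = {}")
      case False
      define c where "c = amax cb (QN s)"
      have cm: "c \<in> QN s \<and> (\<forall>w\<in>QN s. cb w \<le> cb c)" unfolding c_def using amax[OF fin_QN False] .
      have nx: "nxt s t (neighbours P s) = c" using ne C False by (simp add: c_def)
      have Lc: "Lempty c" using F2'[OF sP L] cm by blast
      note m = memQ[of c]
      have "Vb c \<le> ca c + 2*cb c" using Vb_L[OF Lc] .
      then have "dist s c + Vb c \<le> Vb s" using m cm V by linarith
      then show ?thesis using frt_eq[OF _ nx] m cm by blast
    next
      case True
      define c where "c = (SOME v. v \<in> RN s)"
      have cm: "c \<in> RN s" unfolding c_def using C by (auto intro: someI_ex)
      have nx: "nxt s t (neighbours P s) = c" using ne C True by (simp add: c_def)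
      have Lc: "Lempty c" using F3'[OF sP L True cm] .
      note m = memR[OF cm]
      have "Vb c \<le> ca c + 2*cb c" using Vb_L[OF Lc] .
      then have "dist s c + Vb c \<le> Vb s" using m V by (simp add: hh_def)
      then show ?thesis using frt_eq[OF _ nx] m by blast
    qed
  next
    case D
    then have R: "\<not> Rempty s" and L: "\<not> Lempty s" using RE LE by auto
    have V: "Vb s = 2*ca s + 2*cb s + min (ca s) (cb s)" using R L by (simp add: Vb_def)
    show ?thesis
    proof (cases "QN s = {}")
      case False
      define c where "c = amax ca (QN s)"
      have cm: "c \<in> QN s" unfolding c_def using amax[OF fin_QN False] by blast
      have nx: "nxt s t (neighbours P s) = c" using ne D False by (simp add: c_def)
      note m = memQ[OF cm]
      have "Vb c \<le> 2*ca c + 2*cb c + min (ca c) (cb c)" using KB m by blast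
      moreover have "min (ca c) (cb c) \<le> min (ca s) (cb s)" using m by (simp add: min_def)
      ultimately have "dist s c + Vb c \<le> Vb s" using m V by linarith
      then show ?thesis using frt_eq[OF _ nx] m by blast
    next
      case True
      show ?thesis
      proof (cases "cb s \<le> ca s")
        case le: True
        define c where "c = (SOME v. v \<in> RN s)"
        have cm: "c \<in> RN s" unfolding c_def using D by (auto intro: someI_ex)
        have nx: "nxt s t (neighbours P s) = c" using ne D True le by (simp add: c_def)
        note m = memR[OF cm]
        have "Vb c \<le> 2*ca c + 2*cb c + min (ca c) (cb c)" using KB m by blast
        moreover have "min (ca c) (cb c) \<le> cb c" by simp
        moreover have "min (ca s) (cb s) = cb s" using le by (simp add: min_def)
        ultimately have "dist s c + Vb c \<le> Vb s" using m V unfolding hh_def by linarith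
        then show ?thesis using frt_eq[OF _ nx] m by blast
      next
        case gt: False
        define c where "c = (SOME v. v \<in> LN s)"
        have cm: "c \<in> LN s" unfolding c_def using D by (auto intro: someI_ex)
        have nx: "nxt s t (neighbours P s) = c" using ne D True gt by (simp add: c_def)
        note m = memL[OF cm]
        have "Vb c \<le> 2*ca c + 2*cb c + min (ca c) (cb c)" using KB m by blast
        moreover have "min (ca c) (cb c) \<le> ca c" by simp
        moreover have "min (ca s) (cb s) = ca s" using gt by (simp add: min_def)
        ultimately have "dist s c + Vb c \<le> Vb s" using m V unfolding hh_def by linarith
        then show ?thesis using frt_eq[OF _ nx] m by blast
      qed
    qed
  qed
qed

end



context rt begin

lemma main:
  fixes s :: point
  assumes "s \<in> P" "0 < ca s" "0 < cb s"
  shows "\<exists>n. ((\<lambda>s. frt s t (neighbours P s)) ^^ n) s = t \<and>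
    (\<forall>k<n. ((\<lambda>s. frt s t (neighbours P s)) ^^ k) s \<noteq> t) \<and>
    (\<Sum>k<n. dist (((\<lambda>s. frt s t (neighbours P s)) ^^ k) s) (((\<lambda>s. frt s t (neighbours P s)) ^^ Suc k) s)) \<le> Vb s"
  using assms
proof (induction "card {z\<in>P. hh z < hh s}" arbitrary: s rule: less_induct)
  case less
  define g where "g = (\<lambda>s. frt s t (neighbours P s))"
  obtain n1 where n1: "frt s t (neighbours P s) = n1" "Kp n1" "hh n1 < hh s" "dist s n1 + Vb n1 \<le> Vb s"
    using step[OF less.prems] by blast
  have gs: "g s = n1" using n1(1) by (simp add: g_def)
  have st: "s \<noteq> t" using less.prems cat by auto
  show ?case
  proof (cases "n1 = t")
    case True
    have "(g ^^ 1) s = t" using gs True by simp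
    moreover have "\<forall>k<1. (g ^^ k) s \<noteq> t" using st by simp
    moreover have "(\<Sum>k<1. dist ((g ^^ k) s) ((g ^^ Suc k) s)) \<le> Vb s"
      using n1(4) gs True Vb_t by simp
    ultimately show ?thesis unfolding g_def by blast
  next
    case False
    have n1P: "n1 \<in> P" using n1(2) by (simp add: Kp_def)
    have a1: "0 < ca n1"
    proof -
      have "ca n1 \<noteq> ca t" using gp_ca[OF n1P tP False] .
      then show ?thesis using n1(2) cat by (simp add: Kp_def)
    qed
    have b1: "0 < cb n1"
    proof -
      have "cb n1 \<noteq> cb t" using gp_cb[OF n1P tP False] .
      then show ?thesis using n1(2) cat by (simp add: Kp_def)
    qed
    have sub: "{z\<in>P. hh z < hh n1} \<subset> {z\<in>P. hh z < hh s}"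
      using n1(3) n1P by auto
    have "card {z\<in>P. hh z < hh n1} < card {z\<in>P. hh z < hh s}"
      by (rule psubset_card_mono) (use finP sub in auto)
    from less.hyps[OF this n1P a1 b1] obtain m where
      m: "(g ^^ m) n1 = t" "\<forall>k<m. (g ^^ k) n1 \<noteq> t"
         "(\<Sum>k<m. dist ((g ^^ k) n1) ((g ^^ Suc k) n1)) \<le> Vb n1"
      unfolding g_def by blast
    have shift: "(g ^^ Suc k) s = (g ^^ k) n1" for k
      by (simp add: funpow_Suc_right gs del: funpow.simps)
    have "(g ^^ Suc m) s = t" using m(1) shift by simp
    moreover have "\<forall>k<Suc m. (g ^^ k) s \<noteq> t"
    proof (intro allI impI)
      fix k assume k: "k < Suc m"
      show "(g ^^ k) s \<noteq> t"
      proof (cases k)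
        case 0 then show ?thesis using st by simp
      next
        case (Suc k') then show ?thesis using m(2) k shift by simp
      qed
    qed
    moreover have "(\<Sum>k<Suc m. dist ((g ^^ k) s) ((g ^^ Suc k) s)) \<le> Vb s"
    proof -
      have "(\<Sum>k<Suc m. dist ((g ^^ k) s) ((g ^^ Suc k) s))
          = dist ((g ^^ 0) s) ((g ^^ Suc 0) s) + (\<Sum>k<m. dist ((g ^^ Suc k) s) ((g ^^ Suc (Suc k)) s))"
        by (rule sum.lessThan_Suc_shift)
      also have "\<dots> = dist s n1 + (\<Sum>k<m. dist ((g ^^ k) n1) ((g ^^ Suc k) n1))"
        using shift[of 0] by (simp only: shift) simp
      finally show ?thesis using m(3) n1(4) by linarith
    qed
    ultimately show ?thesis unfolding g_def by blast
  qed
qed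

end



lemma inner_comb: "inner (a1 *\<^sub>R ray_dir p + b1 *\<^sub>R ray_dir (p+pi/3)) (a2 *\<^sub>R ray_dir p + b2 *\<^sub>R ray_dir (p+pi/3))
   = a1*a2 + (a1*b2 + b1*a2)/2 + b1*b2"
  by (simp add: inner_add_left inner_add_right inner_d11 inner_d12 inner_d21 inner_d11[of "p+pi/3"] algebra_simps)

lemma norm_comb: "norm (a *\<^sub>R ray_dir p + b *\<^sub>R ray_dir (p+pi/3)) = sqrt (a^2 + a*b + b^2)"
  using norm_coord[of "a *\<^sub>R ray_dir p + b *\<^sub>R ray_dir (p+pi/3)" p] by (simp add: cA_comb cB_comb)

lemma frac_aux: assumes x: "0 < x" and d: "0 < d"
  shows "3/4 * x^2 / (d * (sqrt 3 * (x/2))) = sqrt 3 / 2 * x / (d::real)"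
proof -
  have s3: "sqrt 3 * sqrt 3 = (3::real)" by simp
  have den: "d * (sqrt 3 * (x/2)) \<noteq> 0" using x d by simp
  have "sqrt 3 / 2 * x / d * (d * (sqrt 3 * (x/2))) = (sqrt 3 * sqrt 3) * (x * x) / 4"
    using d by (simp add: field_simps)
  also have "\<dots> = 3/4 * x^2" by (simp add: s3 power2_eq_square)
  finally show ?thesis using den by (simp add: divide_eq_eq)
qed

context rt begin

lemma final_bound: assumes a: "0 < ca w" and b: "0 < cb w"
  shows "2*ca w + 2*cb w + min (ca w) (cb w) = (5 / sqrt 3 * cos (vec_angle (w - t) (canonical_mid i t w - t))
      - sin (vec_angle (w - t) (canonical_mid i t w - t))) * dist t w"
proof -
  define A where "A = ca w"
  define B where "B = cb w"
  define th where "th = cone_start i"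
  have A0: "0 < A" and B0: "0 < B" using a b by (simp_all add: A_def B_def)
  have wt: "w - t = A *\<^sub>R ray_dir th + B *\<^sub>R ray_dir (th + pi/3)"
    unfolding A_def B_def th_def ca_def cb_def by (rule decomp)
  have pd: "proj_dist i t w = sqrt 3 / 2 * (A + B)" using pd0[of t w] cat by (simp add: A_def B_def)
  have fac: "proj_dist i t w / cos (pi/6) = A + B" using pd by (simp add: cos_30)
  have mt: "canonical_mid i t w - t = ((A+B)/2) *\<^sub>R ray_dir th + ((A+B)/2) *\<^sub>R ray_dir (th + pi/3)"
    unfolding canonical_mid_def canonical_corner1_def canonical_corner2_def midpoint_def fac th_def
    by (simp add: prod_eq_iff field_simps)
  define D where "D = sqrt (A^2 + A*B + B^2)"
  have D2: "A^2 + A*B + B^2 > 0" using A0 B0 by (simp add: add_pos_pos)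
  then have Dpos: "0 < D" unfolding D_def by simp
  have DD: "D * D = A^2 + A*B + B^2" unfolding D_def using D2 by simp
  have nw: "norm (w - t) = D" unfolding wt D_def by (rule norm_comb)
  have nm: "norm (canonical_mid i t w - t) = sqrt 3 * ((A+B)/2)"
  proof -
    have "norm (canonical_mid i t w - t) = sqrt (3 * ((A+B)/2)^2)"
      unfolding mt norm_comb by (simp add: power2_eq_square)
    also have "\<dots> = sqrt 3 * ((A+B)/2)" using A0 B0 by (simp add: real_sqrt_mult)
    finally show ?thesis .
  qed
  have inn: "inner (w - t) (canonical_mid i t w - t) = 3/4 * (A+B)^2"
    unfolding wt mt inner_comb by (simp add: power2_eq_square field_simps)
  define xx where "xx = sqrt 3 / 2 * (A + B) / D"
  have s3: "sqrt 3 * sqrt 3 = (3::real)" by simp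
  have s3p: "0 < sqrt (3::real)" by simp
  have va: "vec_angle (w - t) (canonical_mid i t w - t) = arccos xx"
  proof -
    have "inner (w - t) (canonical_mid i t w - t) / (norm (w - t) * norm (canonical_mid i t w - t))
        = 3/4 * (A+B)^2 / (D * (sqrt 3 * ((A+B)/2)))" by (simp only: inn nw nm)
    also have "\<dots> = xx" unfolding xx_def using Dpos A0 B0 by (intro frac_aux) simp_all
    finally show ?thesis unfolding vec_angle_def by simp
  qed
  have x0: "0 \<le> xx" unfolding xx_def using Dpos A0 B0 by simp
  have xsq: "xx^2 = 3/4 * (A+B)^2 / (D*D)" unfolding xx_def using Dpos
    by (simp add: power_divide power_mult_distrib power2_eq_square field_simps)
  have x1: "xx \<le> 1"
  proof -
    have "3/4 * (A+B)^2 \<le> D * D" unfolding DD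
      using zero_le_power2[of "A - B"] by (simp add: power2_eq_square algebra_simps)
    then have "xx^2 \<le> 1" unfolding xsq using Dpos by (simp add: divide_le_eq)
    then show ?thesis using x0 by (simp add: power_le_one_iff abs_le_iff power2_le_iff_abs_le)
  qed
  have cx: "cos (arccos xx) = xx" using x0 x1 by (simp add: cos_arccos)
  have sx: "sin (arccos xx) = \<bar>A - B\<bar> / (2 * D)"
  proof -
    have "sin (arccos xx) = sqrt (1 - xx^2)" using x0 x1 by (simp add: sin_arccos)
    also have "1 - xx^2 = ((A - B) / (2 * D))^2"
    proof -
      have "1 - xx^2 = (D*D - 3/4*(A+B)^2)/(D*D)" unfolding xsq using Dpos by (simp add: field_simps)
      also have "D*D - 3/4*(A+B)^2 = (A-B)^2/4" unfolding DD by (simp add: power2_eq_square algebra_simps)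
      also have "(A-B)^2/4/(D*D) = ((A - B) / (2 * D))^2" by (simp add: power_divide power2_eq_square)
      finally show ?thesis .
    qed
    also have "sqrt (((A - B) / (2 * D))^2) = \<bar>A - B\<bar> / (2 * D)" using Dpos by simp
    finally show ?thesis .
  qed
  have dtw: "dist t w = D" unfolding dist_c D_def A_def B_def using cat by simp
  have "(5 / sqrt 3 * cos (vec_angle (w - t) (canonical_mid i t w - t))
      - sin (vec_angle (w - t) (canonical_mid i t w - t))) * dist t w
      = 5 / sqrt 3 * xx * D - \<bar>A - B\<bar> / (2 * D) * D"
    unfolding va unfolding cx sx dtw by (simp add: algebra_simps)
  also have "\<dots> = 5/2 * (A + B) - \<bar>A - B\<bar> / 2" unfolding xx_def using Dpos s3p by simp
  also have "\<dots> = 2*A + 2*B + min A B" by (auto simp: min_def abs_if field_simps)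
  finally show ?thesis unfolding A_def B_def by simp
qed

end

theorem lemma4:
  shows "\<exists>f :: point \<Rightarrow> point \<Rightarrow> point set \<Rightarrow> point.
    (\<forall>P s t. finite P \<and> general_position P \<and> s \<in> P \<and> t \<in> P \<and> s \<noteq> t \<and> neighbours P s \<noteq> {}
        \<longrightarrow> f s t (neighbours P s) \<in> neighbours P s) \<and>
    (\<forall>P u w i. finite P \<and> general_position P \<and> u \<in> P \<and> w \<in> P \<and> i < 3 \<and> pos_cone i u w \<longrightarrow>
        (\<exists>n. route f P u w n = u \<and> (\<forall>k<n. route f P u w k \<noteq> u) \<and>
             route_length f P u w n \<le>
               (5 / sqrt 3 * cos (vec_angle (w - u) (canonical_mid i u w - u))
                 - sin (vec_angle (w - u) (canonical_mid i u w - u))) * dist u w))"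
proof (intro exI[of _ frt] conjI allI impI)
  fix P s t assume "finite P \<and> general_position P \<and> s \<in> P \<and> t \<in> P \<and> s \<noteq> t \<and> neighbours P s \<noteq> {}"
  then show "frt s t (neighbours P s) \<in> neighbours P s" by (intro frt_valid) simp
next
  fix P u w i assume h: "finite P \<and> general_position P \<and> u \<in> P \<and> w \<in> P \<and> i < 3 \<and> pos_cone i u w"
  interpret R: rt P u i using h by (unfold_locales) auto
  have ab: "0 < R.ca w" "0 < R.cb w" using h R.pc0[of u w] R.cat by auto
  obtain n where n: "((\<lambda>s. frt s u (neighbours P s)) ^^ n) w = u"
    "\<forall>k<n. ((\<lambda>s. frt s u (neighbours P s)) ^^ k) w \<noteq> u"
    "(\<Sum>k<n. dist (((\<lambda>s. frt s u (neighbours P s)) ^^ k) w) (((\<lambda>s. frt s u (neighbours P s)) ^^ Suc k) w)) \<le> R.Vb w"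
    using R.main[of w] h ab by blast
  have "R.Vb w \<le> 2 * R.ca w + 2 * R.cb w + min (R.ca w) (R.cb w)" using R.Vb_B ab by simp
  also have "\<dots> = (5 / sqrt 3 * cos (vec_angle (w - u) (canonical_mid i u w - u))
      - sin (vec_angle (w - u) (canonical_mid i u w - u))) * dist u w" by (rule R.final_bound[OF ab])
  finally show "\<exists>n. route frt P u w n = u \<and> (\<forall>k<n. route frt P u w k \<noteq> u) \<and>
             route_length frt P u w n \<le>
               (5 / sqrt 3 * cos (vec_angle (w - u) (canonical_mid i u w - u))
                 - sin (vec_angle (w - u) (canonical_mid i u w - u))) * dist u w"
    using n unfolding route_def route_length_def by (intro exI[of _ n]) auto
qed


end
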